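(* Let $r\ge 2$ be an integer and let $f\in\mathcal{P}$ (i.e. $f\in\mathcal{P}_c$ for some constant $c>0$). Then $f$ is nowhere differentiable in $\mathbb{R}$.
   Context: $C_p(\mathbb{R})$ denotes the set of all continuous functions $f:\mathbb{R}\to\mathbb{R}$ that are periodic with period $1$ and satisfy $f(0)=0$. Fix an integer $r\ge 2$. For $f\in C_p(\mathbb{R})$ and $(n,k,y)\in\mathbb{N}_0\times\mathbb{Z}\times(0,1)$ (where $\mathbb{N}_0=\mathbb{N}\cup\{0\}$) define $\delta^+_{n,k}(y;f)=\dfrac{f(\frac{k+1}{r^n})-f(\frac{k+y}{r^n})}{\frac{1-y}{r^n}}$ and $\delta^-_{n,k}(y;f)=\dfrac{f(\frac{k+y}{r^n})-f(\frac{k}{r^n})}{\frac{y}{r^n}}$. For a constant $c>0$, $\mathcal{P}_c$ is the set of $f\in C_p(\mathbb{R})$ such that $\delta^+_{n,k}(y;f)-\delta^-_{n,k}(y;f)\le -c$ for all $(n,k,y)\in\mathbb{N}_0\times\mathbb{Z}\times(0,1)$, and $\mathcal{P}=\bigcup_{c>0}\mathcal{P}_c$ (these depend on $r$). *)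

theory Defs
  imports "HOL-Analysis.Analysis"
begin

definition Cp :: "(real \<Rightarrow> real) set" where
  "Cp = {f. continuous_on UNIV f \<and> (\<forall>x. f (x + 1) = f x) \<and> f 0 = 0}"

definition delta_plus :: "nat \<Rightarrow> nat \<Rightarrow> int \<Rightarrow> real \<Rightarrow> (real \<Rightarrow> real) \<Rightarrow> real" where
  "delta_plus r n k y f =
     (f ((real_of_int k + 1) / real r ^ n) - f ((real_of_int k + y) / real r ^ n))
       / ((1 - y) / real r ^ n)"

definition delta_minus :: "nat \<Rightarrow> nat \<Rightarrow> int \<Rightarrow> real \<Rightarrow> (real \<Rightarrow> real) \<Rightarrow> real" where
  "delta_minus r n k y f =
     (f ((real_of_int k + y) / real r ^ n) - f (real_of_int k / real r ^ n))
       / (y / real r ^ n)"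

definition Pc :: "nat \<Rightarrow> real \<Rightarrow> (real \<Rightarrow> real) set" where
  "Pc r c = {f \<in> Cp. \<forall>n::nat. \<forall>k::int. \<forall>y\<in>{0<..<1}.
              delta_plus r n k y f - delta_minus r n k y f \<le> - c}"

definition PP :: "nat \<Rightarrow> (real \<Rightarrow> real) set" where
  "PP r = (\<Union>c\<in>{0<..}. Pc r c)"

end

theory Submission
  imports Defs
begin

theorem theorem2p1:
  fixes r :: nat and f :: "real \<Rightarrow> real"
  assumes "r \<ge> 2"
    and "f \<in> PP r"
  shows "\<forall>x::real. \<not> f differentiable (at x)"
proof (intro allI notI)
  fix x :: real
  assume dif: "f differentiable (at x)"
  obtain c where c: "c > 0" "f \<in> Pc r c" using assms(2) unfolding PP_def by auto
  have P: "\<And>n k y. y \<in> {0<..<1} \<Longrightarrow> delta_plus r n k y f - delta_minus r n k y f \<le> - c"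
    using c(2) unfolding Pc_def by auto
  obtain L where L: "(f has_real_derivative L) (at x)"
    using dif real_differentiable_def by blast
  hence lim: "((\<lambda>y. (f y - f x) / (y - x)) \<longlongrightarrow> L) (at x)"
    using has_field_derivative_iff by blast
  have "c/16 > 0" using c by simp
  from tendstoD[OF lim this] obtain d where d: "d > 0"
    "\<And>y. y \<noteq> x \<Longrightarrow> dist y x < d \<Longrightarrow> dist ((f y - f x) / (y - x)) L < c/16"
    unfolding eventually_at by blast
  have rem: "\<bar>f y - f x - L * (y - x)\<bar> \<le> c/16 * \<bar>y - x\<bar>" if "\<bar>y - x\<bar> < d" for y
  proof (cases "y = x")
    case False
    have "\<bar>(f y - f x) / (y - x) - L\<bar> < c/16"
      using d(2)[OF False] that by (simp add: dist_real_def)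
    hence "\<bar>((f y - f x) / (y - x) - L) * (y - x)\<bar> \<le> c/16 * \<bar>y - x\<bar>"
      unfolding abs_mult by (intro mult_right_mono) auto
    moreover have "((f y - f x) / (y - x) - L) * (y - x) = f y - f x - L * (y - x)"
      using False by (simp add: field_simps)
    ultimately show ?thesis by simp
  qed simp
  have r0: "(0::real) < 1 / real r" "1 / real r < (1::real)" using assms(1) by auto
  obtain n where n: "(1 / real r) ^ n < d" using real_arch_pow_inv[OF d(1) r0(2)] by blast
  define R where "R = real r ^ n"
  have Rpos: "R > 0" using assms(1) unfolding R_def by simp
  define h where "h = 1 / R"
  have hd: "h < d" using n unfolding h_def R_def by (simp add: power_divide)
  have hpos: "h > 0" using Rpos unfolding h_def by simp
  define k where "k = floor (x * R)"
  define a where "a = real_of_int k / R"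
  define b where "b = (real_of_int k + 1) / R"
  define z where "z = (real_of_int k + 1/2) / R"
  have k1: "real_of_int k \<le> x * R" "x * R < real_of_int k + 1" unfolding k_def by linarith+
  have ax: "a \<le> x" using k1 Rpos unfolding a_def by (simp add: divide_le_eq)
  have xb: "x < b" using k1 Rpos unfolding b_def by (simp add: less_divide_eq)
  have bah: "b - a = h" unfolding a_def b_def h_def using Rpos by (simp add: field_simps)
  have zab: "z = (a + b) / 2" unfolding a_def b_def z_def using Rpos by (simp add: field_simps)
  have da: "\<bar>a - x\<bar> \<le> h" "\<bar>b - x\<bar> \<le> h" "\<bar>z - x\<bar> \<le> h"
    using ax xb bah zab by auto
  have ra: "\<bar>f a - f x - L * (a - x)\<bar> \<le> c/16 * h"
    proof -
    have "c/16 * \<bar>a - x\<bar> \<le> c/16 * h" using da(1) c(1) by (intro mult_left_mono) auto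
    thus ?thesis using rem[of a] da(1) hd by linarith
  qed
  have rb: "\<bar>f b - f x - L * (b - x)\<bar> \<le> c/16 * h"
    proof -
    have "c/16 * \<bar>b - x\<bar> \<le> c/16 * h" using da(2) c(1) by (intro mult_left_mono) auto
    thus ?thesis using rem[of b] da(2) hd by linarith
  qed
  have rz: "\<bar>f z - f x - L * (z - x)\<bar> \<le> c/16 * h"
    proof -
    have "c/16 * \<bar>z - x\<bar> \<le> c/16 * h" using da(3) c(1) by (intro mult_left_mono) auto
    thus ?thesis using rem[of z] da(3) hd by linarith
  qed
  have "delta_plus r n k (1/2) f - delta_minus r n k (1/2) f \<le> - c"
    using P by simp
  hence "(f b - f z) / ((1/2) / R) - (f z - f a) / ((1/2) / R) \<le> - c"
    unfolding delta_plus_def delta_minus_def R_def[symmetric] a_def b_def z_def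
    by simp
  hence "2 * R * (f a + f b - 2 * f z) \<le> - c"
    by (simp add: field_simps)
  hence "f a + f b - 2 * f z \<le> - c * h / 2"
    using Rpos unfolding h_def by (simp add: field_simps)
  moreover have "f a + f b - 2 * f z \<ge> - c/4 * h"
    proof -
    have "L * (a - x) + L * (b - x) - 2 * (L * (z - x)) = 0" using zab by (simp add: algebra_simps)
    thus ?thesis using ra rb rz unfolding abs_le_iff by linarith
  qed
  moreover have "c * h > 0" using c(1) hpos by simp
  ultimately show False by linarith
qed

end
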